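(* For any $\bar{y}>0$, with $\tilde{x}$ the unique zero of $H$, one has $D(\bar{y},\tilde{x})>0$ and $\mathcal{G}(\bar{y},\tilde{x})>\beta$; consequently the solution $\tilde{F}$ of the ODE $\tilde{F}'(y)=\mathcal{G}(y,\tilde{F}(y))$ with $\tilde{F}(\bar{y})=\tilde{x}$ satisfies $\tilde{F}'(\bar{y})>\beta$.
   Context: Fix constants $\mu\in\mathbb{R}$, $\kappa>0$, $\sigma>0$, $\rho>0$, $\beta>0$, $c\geq0$, $\bar{y}>0$. Let $D_\alpha(x)=\frac{e^{-x^2/4}}{\Gamma(-\alpha)}\int_0^\infty t^{-\alpha-1}e^{-t^2/2-xt}dt$ ($\alpha<0$) and $\psi(x)=e^{\frac{\kappa(x-\mu)^2}{2\sigma^2}}D_{-\rho/\kappa}\big(-\frac{x-\mu}{\sigma}\sqrt{2\kappa}\big)$, the strictly increasing positive solution of $\frac{\sigma^2}{2}u''+\kappa(\mu-x)u'-\rho u=0$. Let $\tilde{R}(x,y)=\frac{\mu\kappa+\rho x-\beta(\rho+2\kappa)y}{\rho(\rho+\kappa)}$. For $k\geq0$ let $Q_k(z)=\psi^{(k)}(z)\psi^{(k+2)}(z)-\psi^{(k+1)}(z)^2$, so $Q_0'(z)=\psi(z)\psi'''(z)-\psi'(z)\psi''(z)$. Define $H(x)=\psi'(x)(c-\tilde{R}(x,\bar{y}))+(\rho+\kappa)^{-1}\psi(x)$, which has a unique real zero $\tilde{x}$. Define $D(y,z)=\psi(z)\big[(\rho+\kappa)(c-\tilde{R}(z,y))Q_1(z)+Q_0'(z)\big]$,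 $N(y,z)=Q_0(z)\Big(\frac{\rho+2\kappa}{\rho}\psi'(z)+(\rho+\kappa)(c-\tilde{R}(z,y))\psi''(z)+\psi'(z)\Big)$, and $\mathcal{G}(y,z)=\beta N(y,z)/D(y,z)$ for $(y,z)\in\mathbb{R}^2$ with $D(y,z)\neq0$. *)

theory Defs
  imports "HOL-Analysis.Analysis"
begin

text \<open>Parabolic cylinder function D_alpha(x) (integral representation, alpha < 0).\<close>
definition pcD :: "real \<Rightarrow> real \<Rightarrow> real" where
  "pcD \<alpha> x = exp (- x\<^sup>2 / 4) / Gamma (- \<alpha>) *
      (LBINT t:{0<..}. t powr (- \<alpha> - 1) * exp (- t\<^sup>2 / 2 - x * t))"

definition psi :: "real \<Rightarrow> real \<Rightarrow> real \<Rightarrow> real \<Rightarrow> real \<Rightarrow> real" where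
  "psi \<mu> \<kappa> \<sigma> \<rho> x = exp (\<kappa> * (x - \<mu>)\<^sup>2 / (2 * \<sigma>\<^sup>2)) *
      pcD (- \<rho> / \<kappa>) (- (x - \<mu>) / \<sigma> * sqrt (2 * \<kappa>))"

definition psid :: "real \<Rightarrow> real \<Rightarrow> real \<Rightarrow> real \<Rightarrow> nat \<Rightarrow> real \<Rightarrow> real" where
  "psid \<mu> \<kappa> \<sigma> \<rho> k = (deriv ^^ k) (psi \<mu> \<kappa> \<sigma> \<rho>)"

definition Rt :: "real \<Rightarrow> real \<Rightarrow> real \<Rightarrow> real \<Rightarrow> real \<Rightarrow> real \<Rightarrow> real" where
  "Rt \<mu> \<kappa> \<rho> \<beta> x y = (\<mu> * \<kappa> + \<rho> * x - \<beta> * (\<rho> + 2 * \<kappa>) * y) / (\<rho> * (\<rho> + \<kappa>))"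

definition Qk :: "real \<Rightarrow> real \<Rightarrow> real \<Rightarrow> real \<Rightarrow> nat \<Rightarrow> real \<Rightarrow> real" where
  "Qk \<mu> \<kappa> \<sigma> \<rho> k z = psid \<mu> \<kappa> \<sigma> \<rho> k z * psid \<mu> \<kappa> \<sigma> \<rho> (k + 2) z
      - (psid \<mu> \<kappa> \<sigma> \<rho> (k + 1) z)\<^sup>2"

definition Q0' :: "real \<Rightarrow> real \<Rightarrow> real \<Rightarrow> real \<Rightarrow> real \<Rightarrow> real" where
  "Q0' \<mu> \<kappa> \<sigma> \<rho> z = psid \<mu> \<kappa> \<sigma> \<rho> 0 z * psid \<mu> \<kappa> \<sigma> \<rho> 3 z
      - psid \<mu> \<kappa> \<sigma> \<rho> 1 z * psid \<mu> \<kappa> \<sigma> \<rho> 2 z"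

definition Hfun :: "real \<Rightarrow> real \<Rightarrow> real \<Rightarrow> real \<Rightarrow> real \<Rightarrow> real \<Rightarrow> real \<Rightarrow> real \<Rightarrow> real" where
  "Hfun \<mu> \<kappa> \<sigma> \<rho> \<beta> c ybar x = psid \<mu> \<kappa> \<sigma> \<rho> 1 x * (c - Rt \<mu> \<kappa> \<rho> \<beta> x ybar)
      + psid \<mu> \<kappa> \<sigma> \<rho> 0 x / (\<rho> + \<kappa>)"

definition Dfun :: "real \<Rightarrow> real \<Rightarrow> real \<Rightarrow> real \<Rightarrow> real \<Rightarrow> real \<Rightarrow> real \<Rightarrow> real \<Rightarrow> real" where
  "Dfun \<mu> \<kappa> \<sigma> \<rho> \<beta> c y z = psid \<mu> \<kappa> \<sigma> \<rho> 0 z *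
      ((\<rho> + \<kappa>) * (c - Rt \<mu> \<kappa> \<rho> \<beta> z y) * Qk \<mu> \<kappa> \<sigma> \<rho> 1 z + Q0' \<mu> \<kappa> \<sigma> \<rho> z)"

definition Nfun :: "real \<Rightarrow> real \<Rightarrow> real \<Rightarrow> real \<Rightarrow> real \<Rightarrow> real \<Rightarrow> real \<Rightarrow> real \<Rightarrow> real" where
  "Nfun \<mu> \<kappa> \<sigma> \<rho> \<beta> c y z = Qk \<mu> \<kappa> \<sigma> \<rho> 0 z *
      ((\<rho> + 2 * \<kappa>) / \<rho> * psid \<mu> \<kappa> \<sigma> \<rho> 1 z
       + (\<rho> + \<kappa>) * (c - Rt \<mu> \<kappa> \<rho> \<beta> z y) * psid \<mu> \<kappa> \<sigma> \<rho> 2 z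
       + psid \<mu> \<kappa> \<sigma> \<rho> 1 z)"

text \<open>G = beta N / D (only meaningful where D \<noteq> 0).\<close>
definition Gfun :: "real \<Rightarrow> real \<Rightarrow> real \<Rightarrow> real \<Rightarrow> real \<Rightarrow> real \<Rightarrow> real \<Rightarrow> real \<Rightarrow> real" where
  "Gfun \<mu> \<kappa> \<sigma> \<rho> \<beta> c y z = \<beta> * Nfun \<mu> \<kappa> \<sigma> \<rho> \<beta> c y z / Dfun \<mu> \<kappa> \<sigma> \<rho> \<beta> c y z"

end

theory Submission
  imports Defs "HOL-Real_Asymp.Real_Asymp"
begin


definition gJ :: "real \<Rightarrow> nat \<Rightarrow> real \<Rightarrow> real \<Rightarrow> real" where
  "gJ p k s t = indicator {0<..} t * (t powr (p-1) * t^k * exp (-(t^2)/2 + s*t))"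

definition J :: "real \<Rightarrow> nat \<Rightarrow> real \<Rightarrow> real" where
  "J p k s = integral\<^sup>L lborel (gJ p k s)"

lemma gJ_meas[measurable]: "gJ p k s \<in> borel_measurable lborel"
  unfolding gJ_def by measurable

lemma gJ_nonneg: "gJ p k s t \<ge> 0"
  by (auto simp: gJ_def indicator_def)

lemma Gamma_integrable:
  assumes "q > 0"
  shows "integrable lborel (\<lambda>t::real. indicator {0..} t * t powr (q - 1) / exp t)"
proof (rule integrableI_nonneg)
  show "(\<lambda>t. indicator {0..} t * t powr (q - 1) / exp t) \<in> borel_measurable lborel" by measurable
  show "AE x in lborel. 0 \<le> indicator {0..} x * x powr (q - 1) / exp x"
    by (intro AE_I2) (simp add: indicator_def)
  have "(\<integral>\<^sup>+ x. ennreal (indicator {0..} x * x powr (q - 1) / exp x) \<partial>lborel) = ennreal (Gamma q)"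
    using Gamma_conv_nn_integral_real[OF assms] by simp
  then show "(\<integral>\<^sup>+ x. ennreal (indicator {0..} x * x powr (q - 1) / exp x) \<partial>lborel) < \<infinity>"
    by simp
qed

lemma exp_quad_bound: fixes t b :: real shows "exp (-(t^2)/2 + b*t) \<le> exp ((b+1)^2/2) * exp (- t)"
proof -
  have "-(t^2)/2 + b*t \<le> (b+1)^2/2 + - t"
  proof -
    have "0 \<le> (t - (b+1))^2" by simp
    then show ?thesis by (simp add: power2_eq_square algebra_simps)
  qed
  then show ?thesis by (simp flip: exp_add)
qed



lemma gJ_integrable:
  assumes "p > 0"
  shows "integrable lborel (gJ p k s)"
proof (rule Bochner_Integration.integrable_bound)
  show "integrable lborel (\<lambda>t. exp ((s+1)^2/2) * (indicator {0..} t * t powr (real k + p - 1) / exp t))"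
    by (rule integrable_mult_right, rule Gamma_integrable) (use assms in simp)
  show "gJ p k s \<in> borel_measurable lborel" by measurable
  show "AE x in lborel. norm (gJ p k s x) \<le> norm (exp ((s+1)^2/2) * (indicator {0..} x * x powr (real k + p - 1) / exp x))"
  proof (rule AE_I2)
    fix t :: real
    show "norm (gJ p k s t) \<le> norm (exp ((s+1)^2/2) * (indicator {0..} t * t powr (real k + p - 1) / exp t))"
    proof (cases "t > 0")
      case True
      have e: "t powr (p-1) * t^k = t powr (real k + p - 1)"
      proof -
        have "t powr (real k + p - 1) = t powr ((p-1) + real k)" by (simp add: algebra_simps)
        also have "\<dots> = t powr (p-1) * t powr (real k)" by (rule powr_add)
        also have "t powr (real k) = t^k" by (rule powr_realpow[OF True])
        finally show ?thesis by simp
      qed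
      have ind': "indicator {0<..} t = (1::real)" using True by simp
      have "gJ p k s t = t powr (p-1) * t^k * exp (-(t^2)/2 + s*t)"
        by (simp only: gJ_def ind' mult_1)
      also have "\<dots> = t powr (real k + p - 1) * exp (-(t^2)/2 + s*t)"
        by (simp only: e)
      also have "\<dots> \<le> t powr (real k + p - 1) * (exp ((s+1)^2/2) * exp (- t))"
        by (intro mult_left_mono exp_quad_bound) simp
      also have "\<dots> = exp ((s+1)^2/2) * (indicator {0..} t * t powr (real k + p - 1) / exp t)"
      proof -
        have ind: "indicator {0..} t = (1::real)" using True by simp
        have em: "exp (-t) = 1 / exp t" by (simp add: exp_minus inverse_eq_divide)
        show ?thesis unfolding ind em by simp
      qed
      finally have le: "gJ p k s t \<le> exp ((s+1)^2/2) * (indicator {0..} t * t powr (real k + p - 1) / exp t)" .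
      show ?thesis unfolding real_norm_def
        using le gJ_nonneg[of p k s t] abs_ge_self[of "exp ((s+1)^2/2) * (indicator {0..} t * t powr (real k + p - 1) / exp t)"]
        by (simp only: abs_of_nonneg[OF gJ_nonneg])
    next
      case False
      then show ?thesis by (simp add: gJ_def)
    qed
  qed
qed


lemma gJ_deriv_t: "((\<lambda>s. gJ p k s t) has_real_derivative gJ p (Suc k) s t) (at s)"
  unfolding gJ_def by (auto intro!: derivative_eq_intros simp: algebra_simps)

lemma exp_diff_bound:
  fixes a b :: real
  shows "\<bar>exp a - exp b\<bar> \<le> \<bar>a - b\<bar> * exp (max a b)"
proof -
  have *: "exp x - exp y \<le> (x - y) * exp x" if "y \<le> x" for x y :: real
  proof -
    have "1 + (y - x) \<le> exp (y - x)" by (rule exp_ge_add_one_self)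
    then have "exp x * (1 + (y - x)) \<le> exp x * exp (y - x)" by (intro mult_left_mono) auto
    also have "exp x * exp (y - x) = exp y" by (simp flip: exp_add)
    finally show ?thesis by (simp add: algebra_simps)
  qed
  show ?thesis
  proof (cases "b \<le> a")
    case True
    then show ?thesis using *[OF True] by (simp add: max_def)
  next
    case False
    then have ba: "a \<le> b" by simp
    show ?thesis using *[OF ba] False by (simp add: max_def abs_minus_commute)
  qed
qed

lemma gJ_diff_bound:
  assumes "\<bar>s'\<bar> \<le> B"
  shows "\<bar>gJ p k s' t - gJ p k s t\<bar> \<le> \<bar>s' - s\<bar> * gJ p (Suc k) (\<bar>s\<bar> + B) t"
proof (cases "t > 0")
  case True
  let ?a = "-(t^2)/2 + s'*t" and ?b = "-(t^2)/2 + s*t"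
  have C: "t powr (p-1) * t^k \<ge> 0" using True by simp
  have "\<bar>gJ p k s' t - gJ p k s t\<bar> = t powr (p-1) * t^k * \<bar>exp ?a - exp ?b\<bar>"
    using True C by (simp add: gJ_def abs_mult flip: right_diff_distrib)
  also have "\<dots> \<le> t powr (p-1) * t^k * (\<bar>?a - ?b\<bar> * exp (max ?a ?b))"
    by (intro mult_left_mono exp_diff_bound C)
  also have "\<dots> \<le> t powr (p-1) * t^k * (\<bar>s' - s\<bar> * t * exp (-(t^2)/2 + (\<bar>s\<bar> + B)*t))"
  proof (intro mult_left_mono C)
    have "\<bar>?a - ?b\<bar> = \<bar>s' - s\<bar> * t" using True by (simp add: abs_mult flip: left_diff_distrib)
    moreover have "max ?a ?b \<le> -(t^2)/2 + (\<bar>s\<bar> + B)*t"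
    proof -
      have "s' * t \<le> (\<bar>s\<bar> + B)*t" using True assms by (intro mult_right_mono) auto
      moreover have "s * t \<le> (\<bar>s\<bar> + B)*t" using True assms by (intro mult_right_mono) auto
      ultimately show ?thesis by simp
    qed
    ultimately show "\<bar>?a - ?b\<bar> * exp (max ?a ?b) \<le> \<bar>s' - s\<bar> * t * exp (-(t^2)/2 + (\<bar>s\<bar> + B)*t)"
      using True by (simp add: mult_left_mono)
  qed
  also have "\<dots> = \<bar>s' - s\<bar> * gJ p (Suc k) (\<bar>s\<bar> + B) t"
    using True by (simp add: gJ_def)
  finally show ?thesis .
next
  case False
  then show ?thesis by (simp add: gJ_def)
qed


lemma J_deriv:
  assumes p: "p > 0"
  shows "(J p k has_real_derivative J p (Suc k) s) (at s)"
  unfolding has_field_derivative_iff tendsto_at_iff_sequentially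
proof (intro allI impI)
  fix X :: "nat \<Rightarrow> real"
  assume X: "\<forall>i. X i \<in> UNIV - {s}" and lim: "X \<longlonglongrightarrow> s"
  have "Bseq X" using lim by (intro convergent_imp_Bseq convergentI)
  then obtain B where B: "\<And>i. \<bar>X i\<bar> \<le> B" by (metis BseqE real_norm_def)
  have ne: "X i - s \<noteq> 0" for i using X by auto
  have eq: "(J p k (X i) - J p k s) / (X i - s) = integral\<^sup>L lborel (\<lambda>t. (gJ p k (X i) t - gJ p k s t) / (X i - s))" for i
    unfolding J_def using gJ_integrable[OF p] by simp
  have "(\<lambda>i. integral\<^sup>L lborel (\<lambda>t. (gJ p k (X i) t - gJ p k s t) / (X i - s))) \<longlonglongrightarrow> integral\<^sup>L lborel (gJ p (Suc k) s)"
  proof (rule integral_dominated_convergence[where w = "gJ p (Suc k) (\<bar>s\<bar> + B)"])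
    show "gJ p (Suc k) s \<in> borel_measurable lborel" by measurable
    show "(\<lambda>t. (gJ p k (X i) t - gJ p k s t) / (X i - s)) \<in> borel_measurable lborel" for i by measurable
    show "integrable lborel (gJ p (Suc k) (\<bar>s\<bar> + B))" by (rule gJ_integrable[OF p])
    show "AE t in lborel. (\<lambda>i. (gJ p k (X i) t - gJ p k s t) / (X i - s)) \<longlonglongrightarrow> gJ p (Suc k) s t"
    proof (rule AE_I2)
      fix t
      have "((\<lambda>y. (gJ p k y t - gJ p k s t) / (y - s)) \<longlongrightarrow> gJ p (Suc k) s t) (at s)"
        using gJ_deriv_t[of p k t s] unfolding has_field_derivative_iff .
      then show "(\<lambda>i. (gJ p k (X i) t - gJ p k s t) / (X i - s)) \<longlonglongrightarrow> gJ p (Suc k) s t"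
        unfolding tendsto_at_iff_sequentially using X lim by (auto simp: comp_def)
    qed
    show "AE t in lborel. norm ((gJ p k (X i) t - gJ p k s t) / (X i - s)) \<le> gJ p (Suc k) (\<bar>s\<bar> + B) t" for i
    proof (rule AE_I2)
      fix t
      have "\<bar>gJ p k (X i) t - gJ p k s t\<bar> \<le> \<bar>X i - s\<bar> * gJ p (Suc k) (\<bar>s\<bar> + B) t"
        by (rule gJ_diff_bound[OF B])
      then show "norm ((gJ p k (X i) t - gJ p k s t) / (X i - s)) \<le> gJ p (Suc k) (\<bar>s\<bar> + B) t"
        using ne[of i] by (simp add: abs_divide divide_le_eq mult.commute)
    qed
  qed
  then have "(\<lambda>i. (J p k (X i) - J p k s) / (X i - s)) \<longlonglongrightarrow> J p (Suc k) s"
    by (simp only: eq J_def[of p "Suc k" s])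
  then show "((\<lambda>y. (J p k y - J p k s) / (y - s)) \<circ> X) \<longlonglongrightarrow> J p (Suc k) s"
    by (simp add: comp_def)
qed


lemma integral_pos_lborel:
  fixes f :: "real \<Rightarrow> real"
  assumes f: "integrable lborel f" and nn: "\<And>t. 0 \<le> f t"
    and pos: "AE t in lborel. 0 < t \<longrightarrow> 0 < f t"
  shows "integral\<^sup>L lborel f > 0"
proof -
  have ge: "0 \<le> integral\<^sup>L lborel f" by (simp add: nn)
  have "integral\<^sup>L lborel f \<noteq> 0"
  proof
    assume "integral\<^sup>L lborel f = 0"
    then have "AE t in lborel. f t = 0"
      using integral_nonneg_eq_0_iff_AE[OF f] nn by simp
    then have "AE t in lborel. t \<le> (0::real)"
      using pos by eventually_elim auto
    then have "emeasure lborel {(0::real)<..} = 0"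
      by (subst (asm) AE_iff_measurable[of "{0<..}"]) auto
    moreover have "emeasure lborel {0<..(1::real)} \<le> emeasure lborel {(0::real)<..}"
      by (intro emeasure_mono) auto
    ultimately show False by simp
  qed
  with ge show ?thesis by simp
qed

lemma gJ_Suc: "gJ p (Suc k) s t = t * gJ p k s t"
  by (simp add: gJ_def)

lemma gJ_pos: "t > 0 \<Longrightarrow> gJ p k s t > 0"
  by (simp add: gJ_def)

lemma J_pos:
  assumes p: "p > 0"
  shows "J p k s > 0"
  unfolding J_def
  by (rule integral_pos_lborel[OF gJ_integrable[OF p] gJ_nonneg]) (auto intro: gJ_pos)

lemma J_CS:
  assumes p: "p > 0"
  shows "(J p (Suc k) s)^2 < J p k s * J p (Suc (Suc k)) s"
proof -
  define l where "l = J p (Suc k) s / J p k s"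
  have J0: "J p k s > 0" by (rule J_pos[OF p])
  have eq: "gJ p k s t * (t - l)^2 = gJ p (Suc (Suc k)) s t - 2 * l * gJ p (Suc k) s t + l^2 * gJ p k s t" for t
    by (simp add: gJ_Suc power2_eq_square algebra_simps)
  have int: "integrable lborel (\<lambda>t. gJ p k s t * (t - l)^2)"
    unfolding eq using gJ_integrable[OF p] by simp
  have "0 < integral\<^sup>L lborel (\<lambda>t. gJ p k s t * (t - l)^2)"
  proof (rule integral_pos_lborel[OF int])
    show "0 \<le> gJ p k s t * (t - l)^2" for t using gJ_nonneg by simp
    show "AE t in lborel. 0 < t \<longrightarrow> 0 < gJ p k s t * (t - l)^2"
      using AE_lborel_singleton[of l] by eventually_elim (auto intro!: mult_pos_pos gJ_pos)
  qed
  also have "integral\<^sup>L lborel (\<lambda>t. gJ p k s t * (t - l)^2) = J p (Suc (Suc k)) s - 2 * l * J p (Suc k) s + l^2 * J p k s"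
    unfolding eq J_def using gJ_integrable[OF p] by simp
  finally have "0 < J p (Suc (Suc k)) s - 2 * l * J p (Suc k) s + l^2 * J p k s" .
  then have "0 < J p k s * (J p (Suc (Suc k)) s - 2 * l * J p (Suc k) s + l^2 * J p k s)"
    using J0 by simp
  also have "\<dots> = J p k s * J p (Suc (Suc k)) s - (J p (Suc k) s)^2"
    using J0 unfolding l_def by (simp add: field_simps power2_eq_square)
  finally show ?thesis by simp
qed


lemma J_rec:
  assumes p: "p > 0"
  shows "J p (Suc (Suc k)) s = s * J p (Suc k) s + (p + real k) * J p k s"
proof -
  define E where "E t = exp (-(t^2)/2 + s*t)" for t :: real
  define F where "F t = t powr (p + real k) * E t" for t :: real
  define f where "f t = (p + real k) * (t powr (p-1) * t^k * E t) + s * (t powr (p-1) * t^(Suc k) * E t)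
      - t powr (p-1) * t^(Suc (Suc k)) * E t" for t :: real
  have ind_f: "indicator {0<..} t *\<^sub>R f t = (p + real k) * gJ p k s t + s * gJ p (Suc k) s t - gJ p (Suc (Suc k)) s t" for t
    by (cases "t > 0") (simp_all add: gJ_def f_def E_def algebra_simps)
  have pw: "x powr (p + real k - 1) = x powr (p-1) * x^k" "x powr (p + real k) = x powr (p-1) * x^(Suc k)" if x: "x > 0" for x :: real
  proof -
    have "x powr (p + real k - 1) = x powr ((p-1) + real k)" by (simp add: algebra_simps)
    also have "\<dots> = x powr (p-1) * x powr (real k)" by (rule powr_add)
    also have "x powr (real k) = x^k" by (rule powr_realpow[OF x])
    finally show "x powr (p + real k - 1) = x powr (p-1) * x^k" .
    have "x powr (p + real k) = x powr ((p-1) + real (Suc k))" by (simp add: algebra_simps)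
    also have "\<dots> = x powr (p-1) * x powr (real (Suc k))" by (rule powr_add)
    also have "x powr (real (Suc k)) = x^(Suc k)" by (rule powr_realpow[OF x])
    finally show "x powr (p + real k) = x powr (p-1) * x^(Suc k)" .
  qed
  have dF: "(F has_real_derivative f x) (at x)" if x: "x > 0" for x
  proof -
    have d1: "((\<lambda>t. t powr (p + real k)) has_real_derivative (p + real k) * x powr (p + real k - 1)) (at x)"
      by (rule has_real_derivative_powr[OF x])
    have d2: "(E has_real_derivative E x * (s - x)) (at x)"
      unfolding E_def by (auto intro!: derivative_eq_intros simp: algebra_simps)
    have "(F has_real_derivative (p + real k) * x powr (p + real k - 1) * E x + E x * (s - x) * x powr (p + real k)) (at x)"
      unfolding F_def by (rule DERIV_mult[OF d1 d2])
    moreover have "(p + real k) * x powr (p + real k - 1) * E x + E x * (s - x) * x powr (p + real k) = f x"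
      unfolding pw[OF x] f_def by (simp add: algebra_simps)
    ultimately show ?thesis by simp
  qed
  have ei: "einterval 0 \<infinity> = {0<..}" by (auto simp: einterval_def)
  have "(LBINT x=0..\<infinity>. f x) = 0 - 0"
  proof (rule interval_integral_FTC_integrable)
    show "(0::ereal) < \<infinity>" by simp
    show "(F has_vector_derivative f x) (at x)" if "0 < ereal x" "ereal x < \<infinity>" for x
      using dF[of x] that by (simp add: has_real_derivative_iff_has_vector_derivative)
    show "isCont f x" if "0 < ereal x" "ereal x < \<infinity>" for x
      using that unfolding f_def E_def by (auto intro!: continuous_intros)
    show "set_integrable lborel (einterval 0 \<infinity>) f"
      unfolding set_integrable_def ei ind_f using gJ_integrable[OF p] by simp
    show "((F \<circ> real_of_ereal) \<longlongrightarrow> 0) (at_right 0)"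
      unfolding zero_ereal_def ereal_tendsto_simps1 F_def E_def using p by real_asymp
    show "((F \<circ> real_of_ereal) \<longlongrightarrow> 0) (at_left \<infinity>)"
      unfolding ereal_tendsto_simps1 F_def E_def by real_asymp
  qed
  moreover have "(LBINT x=0..\<infinity>. f x) = (p + real k) * J p k s + s * J p (Suc k) s - J p (Suc (Suc k)) s"
    unfolding interval_lebesgue_integral_def set_lebesgue_integral_def ei ind_f J_def
    using gJ_integrable[OF p] by simp
  ultimately show ?thesis by simp
qed


lemma alg:
  fixes P0 P1 P2 P3 K r k b :: real
  assumes pos: "P0 > 0" "P1 > 0" "P2 > 0" "r > 0" "k > 0" "b > 0"
    and H: "P1 * K + P0 = 0"
    and Q0: "P0*P2 - P1^2 > 0"
    and M: "(r+k)*P1^2 - r*P0*P2 > 0"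
  shows "P0 * (K * (P1*P3 - P2^2) + (P0*P3 - P1*P2)) > 0"
    and "b * ((P0*P2 - P1^2) * ((r + 2*k)/r * P1 + K * P2 + P1)) / (P0 * (K * (P1*P3 - P2^2) + (P0*P3 - P1*P2))) > b"
proof -
  have K: "K = - P0 / P1" using H pos by (simp add: field_simps)
  have Deq: "P0 * (K * (P1*P3 - P2^2) + (P0*P3 - P1*P2)) = P0 * P2 * (P0*P2 - P1^2) / P1"
    unfolding K using pos by (simp add: field_simps power2_eq_square)
  show Dpos: "P0 * (K * (P1*P3 - P2^2) + (P0*P3 - P1*P2)) > 0"
    unfolding Deq using pos Q0 by simp
  have Neq: "(P0*P2 - P1^2) * ((r + 2*k)/r * P1 + K * P2 + P1)
      = P0 * (K * (P1*P3 - P2^2) + (P0*P3 - P1*P2)) + (P0*P2 - P1^2) * (2 * ((r+k)*P1^2 - r*P0*P2)) / (r * P1)"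
    unfolding Deq unfolding K using pos by (simp add: field_simps power2_eq_square)
  have "(P0*P2 - P1^2) * (2 * ((r+k)*P1^2 - r*P0*P2)) / (r * P1) > 0"
    using pos Q0 M by simp
  then have "(P0*P2 - P1^2) * ((r + 2*k)/r * P1 + K * P2 + P1) > P0 * (K * (P1*P3 - P2^2) + (P0*P3 - P1*P2))"
    unfolding Neq by simp
  then have "b * ((P0*P2 - P1^2) * ((r + 2*k)/r * P1 + K * P2 + P1)) > b * (P0 * (K * (P1*P3 - P2^2) + (P0*P3 - P1*P2)))"
    using pos by simp
  then show "b * ((P0*P2 - P1^2) * ((r + 2*k)/r * P1 + K * P2 + P1)) / (P0 * (K * (P1*P3 - P2^2) + (P0*P3 - P1*P2))) > b"
    using Dpos by (simp add: less_divide_eq)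
qed

lemma psi_eq:
  assumes k: "\<kappa> > 0" and sg: "\<sigma> > 0" and r: "\<rho> > 0"
  shows "psi \<mu> \<kappa> \<sigma> \<rho> x = J (\<rho>/\<kappa>) 0 (sqrt (2*\<kappa>)/\<sigma> * (x - \<mu>)) / Gamma (\<rho>/\<kappa>)"
proof -
  define z where "z = - (x - \<mu>) / \<sigma> * sqrt (2 * \<kappa>)"
  have sq: "(sqrt (2*\<kappa>))^2 = 2*\<kappa>" using k by simp
  have ex: "exp (\<kappa> * (x - \<mu>)\<^sup>2 / (2 * \<sigma>\<^sup>2)) * exp (- z\<^sup>2 / 4) = 1"
  proof -
    have "z^2 = (x - \<mu>)^2 / \<sigma>^2 * (sqrt (2*\<kappa>))^2" by (simp only: z_def power_mult_distrib power_divide power2_minus)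
    then have "z^2 = (x - \<mu>)^2 / \<sigma>^2 * (2*\<kappa>)" using sq by simp
    then have "\<kappa> * (x - \<mu>)\<^sup>2 / (2 * \<sigma>\<^sup>2) + - z\<^sup>2 / 4 = 0" using sg by (simp add: field_simps)
    then show ?thesis by (simp flip: exp_add)
  qed
  have zz: "- z = sqrt (2*\<kappa>)/\<sigma> * (x - \<mu>)" unfolding z_def using sg by (simp add: field_simps)
  have ex2: "- t\<^sup>2 / 2 - z * t = -(t^2)/2 + sqrt (2*\<kappa>)/\<sigma> * (x - \<mu>) * t" for t
  proof -
    have "- t\<^sup>2 / 2 - z * t = -(t^2)/2 + (- z) * t" by simp
    then show ?thesis unfolding zz .
  qed
  have pe: "- (- \<rho> / \<kappa>) - 1 = \<rho>/\<kappa> - 1" by simp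
  have fun_eq: "(\<lambda>t. indicator {0<..} t *\<^sub>R (t powr (- (- \<rho> / \<kappa>) - 1) * exp (- t\<^sup>2 / 2 - z * t)))
      = gJ (\<rho>/\<kappa>) 0 (sqrt (2*\<kappa>)/\<sigma> * (x - \<mu>))"
    by (rule ext) (simp only: gJ_def ex2 pe power_0 mult_1_right real_scaleR_def)
  have "psi \<mu> \<kappa> \<sigma> \<rho> x = exp (\<kappa> * (x - \<mu>)\<^sup>2 / (2 * \<sigma>\<^sup>2)) * (exp (- z\<^sup>2 / 4) / Gamma (\<rho>/\<kappa>) *
      J (\<rho>/\<kappa>) 0 (sqrt (2*\<kappa>)/\<sigma> * (x - \<mu>)))"
    unfolding psi_def pcD_def z_def[symmetric] set_lebesgue_integral_def fun_eq J_def by simp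
  also have "\<dots> = (exp (\<kappa> * (x - \<mu>)\<^sup>2 / (2 * \<sigma>\<^sup>2)) * exp (- z\<^sup>2 / 4)) * J (\<rho>/\<kappa>) 0 (sqrt (2*\<kappa>)/\<sigma> * (x - \<mu>)) / Gamma (\<rho>/\<kappa>)"
    by simp
  finally show ?thesis unfolding ex by simp
qed

lemma psid_eq:
  assumes k: "\<kappa> > 0" and sg: "\<sigma> > 0" and r: "\<rho> > 0"
  shows "psid \<mu> \<kappa> \<sigma> \<rho> n = (\<lambda>x. (sqrt (2*\<kappa>)/\<sigma>)^n * J (\<rho>/\<kappa>) n (sqrt (2*\<kappa>)/\<sigma> * (x - \<mu>)) / Gamma (\<rho>/\<kappa>))"
proof (induction n)
  case 0
  show ?case unfolding psid_def using psi_eq[OF k sg r] by auto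
next
  case (Suc n)
  have p: "\<rho>/\<kappa> > 0" using k r by simp
  have "psid \<mu> \<kappa> \<sigma> \<rho> (Suc n) = deriv (psid \<mu> \<kappa> \<sigma> \<rho> n)"
    unfolding psid_def by simp
  also have "\<dots> = (\<lambda>x. (sqrt (2*\<kappa>)/\<sigma>)^(Suc n) * J (\<rho>/\<kappa>) (Suc n) (sqrt (2*\<kappa>)/\<sigma> * (x - \<mu>)) / Gamma (\<rho>/\<kappa>))"
  proof (rule ext, rule DERIV_imp_deriv)
    fix x
    let ?a = "sqrt (2*\<kappa>)/\<sigma>"
    have d: "((\<lambda>x. J (\<rho>/\<kappa>) n (?a * (x - \<mu>))) has_real_derivative J (\<rho>/\<kappa>) (Suc n) (?a * (x - \<mu>)) * ?a) (at x)"
      using sg by (intro DERIV_chain2[OF J_deriv[OF p]]) (auto intro!: derivative_eq_intros)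
    have "((\<lambda>x. ?a^n * J (\<rho>/\<kappa>) n (?a * (x - \<mu>)) / Gamma (\<rho>/\<kappa>)) has_real_derivative
        ?a^n * (J (\<rho>/\<kappa>) (Suc n) (?a * (x - \<mu>)) * ?a) / Gamma (\<rho>/\<kappa>)) (at x)"
      by (intro DERIV_cdivide DERIV_cmult d)
    then show "(psid \<mu> \<kappa> \<sigma> \<rho> n has_real_derivative ?a^(Suc n) * J (\<rho>/\<kappa>) (Suc n) (?a * (x - \<mu>)) / Gamma (\<rho>/\<kappa>)) (at x)"
      unfolding Suc.IH using sg by (simp add: algebra_simps)
  qed
  finally show ?case .
qed

theorem lemma4p3:
  fixes \<mu> \<kappa> \<sigma> \<rho> \<beta> c ybar xt :: real
  assumes "\<kappa> > 0" "\<sigma> > 0" "\<rho> > 0" "\<beta> > 0" "c \<ge> 0" "ybar > 0"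
    and "Hfun \<mu> \<kappa> \<sigma> \<rho> \<beta> c ybar xt = 0"
    and "\<forall>x. Hfun \<mu> \<kappa> \<sigma> \<rho> \<beta> c ybar x = 0 \<longrightarrow> x = xt"
  shows "Dfun \<mu> \<kappa> \<sigma> \<rho> \<beta> c ybar xt > 0
    \<and> Gfun \<mu> \<kappa> \<sigma> \<rho> \<beta> c ybar xt > \<beta>
    \<and> (\<forall>F U. open U \<and> ybar \<in> U \<and> F ybar = xt
          \<and> (\<forall>y\<in>U. (F has_real_derivative Gfun \<mu> \<kappa> \<sigma> \<rho> \<beta> c y (F y)) (at y))
          \<longrightarrow> deriv F ybar > \<beta>)"
proof -
  note k = assms(1) and sg = assms(2) and r = assms(3) and b = assms(4)
  define p where "p = \<rho>/\<kappa>"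
  define a where "a = sqrt (2*\<kappa>)/\<sigma>"
  define s where "s = a * (xt - \<mu>)"
  define G where "G = Gamma p"
  have pp: "p > 0" unfolding p_def using k r by simp
  have ap: "a > 0" unfolding a_def using k sg by simp
  have Gp: "G > 0" unfolding G_def using pp by (simp add: Gamma_real_pos)
  have rho: "\<rho> = p * \<kappa>" unfolding p_def using k by simp
  have Pk: "psid \<mu> \<kappa> \<sigma> \<rho> n xt = a^n * J p n s / G" for n
    unfolding psid_eq[OF k sg r] p_def a_def s_def G_def by simp
  define J0 J1 J2 J3 where "J0 = J p 0 s" and "J1 = J p 1 s" and "J2 = J p 2 s" and "J3 = J p 3 s"
  have J0p: "J0 > 0" and J1p: "J1 > 0" and J2p: "J2 > 0"
    unfolding J0_def J1_def J2_def using J_pos[OF pp] by auto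
  have CS0: "J1^2 < J0 * J2" unfolding J0_def J1_def J2_def using J_CS[OF pp, of 0 s] by (simp add: numeral_2_eq_2)
  have CS1: "J2^2 < J1 * J3" unfolding J3_def J1_def J2_def using J_CS[OF pp, of 1 s] by (simp add: numeral_2_eq_2 numeral_3_eq_3)
  have R0: "J2 = s * J1 + p * J0" unfolding J0_def J1_def J2_def using J_rec[OF pp, of 0 s] by (simp add: numeral_2_eq_2)
  have R1: "J3 = s * J2 + (p + 1) * J1" unfolding J3_def J1_def J2_def using J_rec[OF pp, of 1 s] by (simp add: numeral_2_eq_2 numeral_3_eq_3)
  define P0 P1 P2 P3 where "P0 = psid \<mu> \<kappa> \<sigma> \<rho> 0 xt" and "P1 = psid \<mu> \<kappa> \<sigma> \<rho> 1 xt"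
    and "P2 = psid \<mu> \<kappa> \<sigma> \<rho> 2 xt" and "P3 = psid \<mu> \<kappa> \<sigma> \<rho> 3 xt"
  have P0e: "P0 = J0 / G" and P1e: "P1 = a * J1 / G" and P2e: "P2 = a^2 * J2 / G"
    unfolding P0_def P1_def P2_def Pk J0_def J1_def J2_def by simp_all
  have P0p: "P0 > 0" unfolding P0e using J0p Gp by simp
  have P1p: "P1 > 0" unfolding P1e using J1p Gp ap by simp
  have P2p: "P2 > 0" unfolding P2e using J2p Gp ap by simp
  have Q0: "P0*P2 - P1^2 > 0"
  proof -
    have "P0*P2 - P1^2 = a^2 * (J0 * J2 - J1^2) / G^2" unfolding P0e P1e P2e using Gp
      by (simp add: field_simps power2_eq_square)
    then show ?thesis using CS0 ap Gp by simp
  qed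
  have M: "(\<rho>+\<kappa>)*P1^2 - \<rho>*P0*P2 > 0"
  proof -
    have "(p+1)*J1^2 - p*J0*J2 = J1*J3 - J2^2" unfolding R1 R0 by (simp add: algebra_simps power2_eq_square)
    then have m: "(p+1)*J1^2 - p*J0*J2 > 0" using CS1 by simp
    have "(\<rho>+\<kappa>)*P1^2 - \<rho>*P0*P2 = \<kappa> * a^2 * ((p+1)*J1^2 - p*J0*J2) / G^2"
      unfolding P0e P1e P2e rho using Gp by (simp add: field_simps power2_eq_square)
    then show ?thesis using m k ap Gp by simp
  qed
  define K where "K = (\<rho> + \<kappa>) * (c - Rt \<mu> \<kappa> \<rho> \<beta> xt ybar)"
  have H: "P1 * K + P0 = 0"
  proof -
    have "P1 * (c - Rt \<mu> \<kappa> \<rho> \<beta> xt ybar) + P0 / (\<rho> + \<kappa>) = 0"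
      using assms(7) unfolding Hfun_def P0_def P1_def .
    then have "(\<rho> + \<kappa>) * (P1 * (c - Rt \<mu> \<kappa> \<rho> \<beta> xt ybar) + P0 / (\<rho> + \<kappa>)) = 0" by simp
    moreover have "(\<rho> + \<kappa>) * (P1 * (c - Rt \<mu> \<kappa> \<rho> \<beta> xt ybar) + P0 / (\<rho> + \<kappa>)) = P1 * K + P0"
    proof -
      have ne: "\<rho> + \<kappa> \<noteq> 0" using k r by simp
      show ?thesis unfolding K_def using ne by (simp add: field_simps)
    qed
    ultimately show ?thesis by simp
  qed
  have Deq: "Dfun \<mu> \<kappa> \<sigma> \<rho> \<beta> c ybar xt = P0 * (K * (P1*P3 - P2^2) + (P0*P3 - P1*P2))"
    unfolding Dfun_def Qk_def Q0'_def K_def P0_def P1_def P2_def P3_def by (simp add: numeral_2_eq_2 numeral_3_eq_3)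
  have Geq: "Gfun \<mu> \<kappa> \<sigma> \<rho> \<beta> c ybar xt = \<beta> * ((P0*P2 - P1^2) * ((\<rho> + 2*\<kappa>)/\<rho> * P1 + K * P2 + P1)) / (P0 * (K * (P1*P3 - P2^2) + (P0*P3 - P1*P2)))"
    unfolding Gfun_def Nfun_def Deq[symmetric] unfolding Qk_def K_def P0_def P1_def P2_def P3_def
    by (simp add: numeral_2_eq_2 numeral_3_eq_3)
  have A: "P0 * (K * (P1*P3 - P2^2) + (P0*P3 - P1*P2)) > 0"
    and B: "\<beta> * ((P0*P2 - P1^2) * ((\<rho> + 2*\<kappa>)/\<rho> * P1 + K * P2 + P1)) / (P0 * (K * (P1*P3 - P2^2) + (P0*P3 - P1*P2))) > \<beta>"
    using alg[OF P0p P1p P2p r k b H Q0 M] by auto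
  have D1: "Dfun \<mu> \<kappa> \<sigma> \<rho> \<beta> c ybar xt > 0" using A Deq by simp
  have G1: "Gfun \<mu> \<kappa> \<sigma> \<rho> \<beta> c ybar xt > \<beta>" using B Geq by simp
  have T: "deriv F ybar > \<beta>" if "open U \<and> ybar \<in> U \<and> F ybar = xt
          \<and> (\<forall>y\<in>U. (F has_real_derivative Gfun \<mu> \<kappa> \<sigma> \<rho> \<beta> c y (F y)) (at y))" for F U
  proof -
    from that have "(F has_real_derivative Gfun \<mu> \<kappa> \<sigma> \<rho> \<beta> c ybar xt) (at ybar)" by auto
    then have "deriv F ybar = Gfun \<mu> \<kappa> \<sigma> \<rho> \<beta> c ybar xt" by (rule DERIV_imp_deriv)
    then show ?thesis using G1 by simp
  qed
  show ?thesis using D1 G1 T by blast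
qed

end
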